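(* Let $X$ be a Tychonoff space and let $\mathcal{H}$ be a subspace with $\mathcal{F}_2(X)\subset\mathcal{H}\subset\mathcal{K}(X)$. Then the following are equivalent: (a) $X$ is a $P$-space; (b) $\mathcal{H}$ is a $P$-space; (c) $\mathcal{H}$ is an $F'$-space.
   Context: For a $T_1$ space $X$, $\mathcal{K}(X)$ is the set of nonempty compact subsets of $X$ with the Vietoris topology (generated by $U^+=\{A: A\subset U\}$ and $U^-=\{A: A\cap U\neq\emptyset\}$ for $U$ open in $X$), and $\mathcal{F}_n(X)\subset\mathcal{K}(X)$ is the subspace of nonempty subsets with at most $n$ points. A point $p$ is a $P$-point of $X$ if $p$ lies in the interior of every $G_\delta$ set containing it; $X$ is a $P$-space if all its points are $P$-points. A cozero set is the complement of the zero set $f^{-1}(0)$ of a continuous real-valued function $f$. An $F'$-space is a Tychonoff space in which any two disjoint cozero sets have disjoint closures. *)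

theory Defs
  imports "HOL-Analysis.Analysis"
begin

definition tychonoff_space :: "'a topology \<Rightarrow> bool" where
  "tychonoff_space X \<longleftrightarrow> completely_regular_space X \<and> t1_space X"

definition hyp_K :: "'a topology \<Rightarrow> 'a set set" where
  "hyp_K X = {A. A \<noteq> {} \<and> compactin X A}"

definition hyp_F :: "nat \<Rightarrow> 'a topology \<Rightarrow> 'a set set" where
  "hyp_F n X = {A. A \<noteq> {} \<and> A \<subseteq> topspace X \<and> finite A \<and> card A \<le> n}"

definition vietoris :: "'a topology \<Rightarrow> 'a set topology" where
  "vietoris X = topology_generated_by
     ({{A \<in> hyp_K X. A \<subseteq> U} | U. openin X U} \<union>
      {{A \<in> hyp_K X. A \<inter> U \<noteq> {}} | U. openin X U})"

definition p_point :: "'a topology \<Rightarrow> 'a \<Rightarrow> bool" where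
  "p_point X p \<longleftrightarrow> p \<in> topspace X \<and>
     (\<forall>G. gdelta_in X G \<and> p \<in> G \<longrightarrow> p \<in> X interior_of G)"

definition p_space :: "'a topology \<Rightarrow> bool" where
  "p_space X \<longleftrightarrow> (\<forall>p \<in> topspace X. p_point X p)"

definition cozero_set :: "'a topology \<Rightarrow> 'a set \<Rightarrow> bool" where
  "cozero_set X C \<longleftrightarrow>
     (\<exists>f. continuous_map X euclideanreal f \<and> C = {x \<in> topspace X. f x \<noteq> 0})"

definition f_prime_space :: "'a topology \<Rightarrow> bool" where
  "f_prime_space X \<longleftrightarrow> tychonoff_space X \<and>
     (\<forall>C D. cozero_set X C \<and> cozero_set X D \<and> C \<inter> D = {} \<longrightarrow>
            X closure_of C \<inter> X closure_of D = {})"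

end

theory Submission
  imports Defs
begin

definition NB :: "'a topology \<Rightarrow> 'a set \<Rightarrow> ('a \<Rightarrow> 'a set) \<Rightarrow> 'a set set" where
  "NB X A Q = {B \<in> hyp_K X. B \<subseteq> \<Union>(Q ` A) \<and> (\<forall>a\<in>A. B \<inter> Q a \<noteq> {})}"

lemma hyp_K_sub: "A \<in> hyp_K X \<Longrightarrow> A \<subseteq> topspace X"
  by (simp add: hyp_K_def compactin_subset_topspace)

lemma topspace_vietoris: "topspace (vietoris X) = hyp_K X"
proof -
  have "hyp_K X \<subseteq> {A \<in> hyp_K X. A \<subseteq> topspace X}" using hyp_K_sub by blast
  then show ?thesis unfolding vietoris_def topology_generated_by_topspace by blast
qed

lemma openin_plus: "openin X U \<Longrightarrow> openin (vietoris X) {A \<in> hyp_K X. A \<subseteq> U}"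
  unfolding vietoris_def by (rule topology_generated_by_Basis) blast

lemma openin_minus: "openin X U \<Longrightarrow> openin (vietoris X) {A \<in> hyp_K X. A \<inter> U \<noteq> {}}"
  unfolding vietoris_def by (rule topology_generated_by_Basis) blast

lemma NB_mono: "(\<And>a. a \<in> A \<Longrightarrow> P a \<subseteq> Q a) \<Longrightarrow> NB X A P \<subseteq> NB X A Q"
  unfolding NB_def by blast

lemma NB_self: "A \<in> hyp_K X \<Longrightarrow> (\<And>a. a \<in> A \<Longrightarrow> a \<in> Q a) \<Longrightarrow> A \<in> NB X A Q"
  unfolding NB_def by blast

lemma local_base_aux:
  assumes "generate_topology_on
     ({{A \<in> hyp_K X. A \<subseteq> U} | U. openin X U} \<union>
      {{A \<in> hyp_K X. A \<inter> U \<noteq> {}} | U. openin X U}) W"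
  shows "\<forall>A\<in>W. \<exists>Q. (\<forall>a\<in>A. openin X (Q a) \<and> a \<in> Q a) \<and> NB X A Q \<subseteq> W"
  using assms
proof induction
  case Empty
  then show ?case by simp
next
  case (Int a b)
  show ?case
  proof
    fix A assume "A \<in> a \<inter> b"
    then have "A \<in> a" "A \<in> b" by auto
    obtain Q1 where 1: "\<forall>x\<in>A. openin X (Q1 x) \<and> x \<in> Q1 x" "NB X A Q1 \<subseteq> a"
      using Int.IH(1) \<open>A \<in> a\<close> by blast
    obtain Q2 where 2: "\<forall>x\<in>A. openin X (Q2 x) \<and> x \<in> Q2 x" "NB X A Q2 \<subseteq> b"
      using Int.IH(2) \<open>A \<in> b\<close> by blast
    have "NB X A (\<lambda>x. Q1 x \<inter> Q2 x) \<subseteq> NB X A Q1" "NB X A (\<lambda>x. Q1 x \<inter> Q2 x) \<subseteq> NB X A Q2"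
      by (rule NB_mono, simp)+
    then have "NB X A (\<lambda>x. Q1 x \<inter> Q2 x) \<subseteq> a \<inter> b" using 1(2) 2(2) by blast
    moreover have "\<forall>x\<in>A. openin X (Q1 x \<inter> Q2 x) \<and> x \<in> Q1 x \<inter> Q2 x" using 1(1) 2(1) by blast
    ultimately show "\<exists>Q. (\<forall>x\<in>A. openin X (Q x) \<and> x \<in> Q x) \<and> NB X A Q \<subseteq> a \<inter> b"
      by (intro exI[of _ "\<lambda>x. Q1 x \<inter> Q2 x"]) simp
  qed
next
  case (UN K)
  show ?case
  proof
    fix A assume "A \<in> \<Union>K"
    then obtain k where "k \<in> K" "A \<in> k" by blast
    then obtain Q where "\<forall>x\<in>A. openin X (Q x) \<and> x \<in> Q x" "NB X A Q \<subseteq> k"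
      using UN.IH by blast
    then show "\<exists>Q. (\<forall>x\<in>A. openin X (Q x) \<and> x \<in> Q x) \<and> NB X A Q \<subseteq> \<Union>K"
      using \<open>k \<in> K\<close> by blast
  qed
next
  case (Basis s)
  show ?case
  proof
    fix A assume A: "A \<in> s"
    from Basis.hyps show "\<exists>Q. (\<forall>a\<in>A. openin X (Q a) \<and> a \<in> Q a) \<and> NB X A Q \<subseteq> s"
    proof
      assume "s \<in> {{A \<in> hyp_K X. A \<subseteq> U} | U. openin X U}"
      then obtain U where U: "openin X U" and seq: "s = {A \<in> hyp_K X. A \<subseteq> U}" by blast
      have "A \<in> {A \<in> hyp_K X. A \<subseteq> U}" using A unfolding seq .
      then have "A \<in> hyp_K X" "A \<subseteq> U" by simp_all
      then have "A \<noteq> {}" by (simp add: hyp_K_def)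
      have "NB X A (\<lambda>x. U) \<subseteq> {A \<in> hyp_K X. A \<subseteq> U}" unfolding NB_def using \<open>A \<noteq> {}\<close> by auto
      then have "NB X A (\<lambda>x. U) \<subseteq> s" using seq by simp
      moreover have "\<forall>a\<in>A. openin X U \<and> a \<in> U" using U \<open>A \<subseteq> U\<close> by blast
      ultimately show ?thesis by (intro exI[of _ "\<lambda>x. U"]) simp
    next
      assume "s \<in> {{A \<in> hyp_K X. A \<inter> U \<noteq> {}} | U. openin X U}"
      then obtain U where U: "openin X U" and seq: "s = {A \<in> hyp_K X. A \<inter> U \<noteq> {}}" by blast
      have "A \<in> {A \<in> hyp_K X. A \<inter> U \<noteq> {}}" using A unfolding seq .
      then have "A \<in> hyp_K X" "A \<inter> U \<noteq> {}" by simp_all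
      then obtain a0 where a0: "a0 \<in> A" "a0 \<in> U" by blast
      have sub: "A \<subseteq> topspace X" using \<open>A \<in> hyp_K X\<close> hyp_K_sub by blast
      define Q where "Q = (\<lambda>x. if x = a0 then U else topspace X)"
      have "NB X A Q \<subseteq> {A \<in> hyp_K X. A \<inter> U \<noteq> {}}"
      proof
        fix B assume "B \<in> NB X A Q"
        then have "B \<in> hyp_K X" "B \<inter> Q a0 \<noteq> {}" using a0 unfolding NB_def by blast+
        then show "B \<in> {A \<in> hyp_K X. A \<inter> U \<noteq> {}}" unfolding Q_def by simp
      qed
      then have "NB X A Q \<subseteq> s" using seq by simp
      moreover have "\<forall>a\<in>A. openin X (Q a) \<and> a \<in> Q a"
        using U a0 sub unfolding Q_def by auto
      ultimately show ?thesis by (intro exI[of _ Q]) simp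
    qed
  qed
qed

lemma local_base:
  assumes "openin (vietoris X) W" "A \<in> W"
  shows "\<exists>Q. (\<forall>a\<in>A. openin X (Q a) \<and> a \<in> Q a) \<and> NB X A Q \<subseteq> W"
  using local_base_aux[of X W] assms unfolding vietoris_def openin_topology_generated_by_iff
  by blast

lemma NB_eq:
  assumes "A \<noteq> {}"
  shows "NB X A Q = {B \<in> hyp_K X. B \<subseteq> \<Union>(Q ` A)} \<inter> \<Inter>((\<lambda>a. {B \<in> hyp_K X. B \<inter> Q a \<noteq> {}}) ` A)"
  using assms unfolding NB_def by blast

lemma NB_open:
  assumes "finite A" "A \<noteq> {}" "\<And>a. a \<in> A \<Longrightarrow> openin X (Q a)"
  shows "openin (vietoris X) (NB X A Q)"
  unfolding NB_eq[OF assms(2)]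
  using assms by (intro openin_Int openin_plus openin_Inter) (auto intro: openin_minus)

lemma closedin_plus:
  assumes "closedin X U" shows "closedin (vietoris X) {A \<in> hyp_K X. A \<subseteq> U}"
proof -
  have "openin (vietoris X) {A \<in> hyp_K X. A \<inter> (topspace X - U) \<noteq> {}}"
    using assms by (intro openin_minus) (simp add: openin_diff)
  moreover have "topspace (vietoris X) - {A \<in> hyp_K X. A \<subseteq> U} = {A \<in> hyp_K X. A \<inter> (topspace X - U) \<noteq> {}}"
    using hyp_K_sub by (auto simp: topspace_vietoris)
  ultimately show ?thesis by (simp add: closedin_def topspace_vietoris)
qed

lemma closedin_minus:
  assumes "closedin X U" shows "closedin (vietoris X) {A \<in> hyp_K X. A \<inter> U \<noteq> {}}"
proof -
  have "openin (vietoris X) {A \<in> hyp_K X. A \<subseteq> (topspace X - U)}"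
    using assms by (intro openin_plus) (simp add: openin_diff)
  moreover have "topspace (vietoris X) - {A \<in> hyp_K X. A \<inter> U \<noteq> {}} = {A \<in> hyp_K X. A \<subseteq> (topspace X - U)}"
    using hyp_K_sub by (auto simp: topspace_vietoris)
  ultimately show ?thesis by (simp add: closedin_def topspace_vietoris)
qed

lemma NB_closed:
  assumes "finite A" "A \<noteq> {}" "\<And>a. a \<in> A \<Longrightarrow> closedin X (Q a)"
  shows "closedin (vietoris X) (NB X A Q)"
  unfolding NB_eq[OF assms(2)]
  using assms by (intro closedin_Int closedin_plus closedin_Inter closedin_Union) (auto intro: closedin_minus)

lemma p_space_interior:
  assumes "p_space X" "gdelta_in X G" "x \<in> G"
  shows "\<exists>V. openin X V \<and> x \<in> V \<and> V \<subseteq> G"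
proof -
  have "x \<in> topspace X" using assms gdelta_in_subset by blast
  then have "p_point X x" using assms(1) by (simp add: p_space_def)
  then have "x \<in> X interior_of G" using assms by (simp add: p_point_def)
  then show ?thesis by (simp add: interior_of_def)
qed

lemma p_space_compact_finite:
  assumes P: "p_space X" and T1: "t1_space X" and K: "compactin X A"
  shows "finite A"
proof (rule ccontr)
  assume "infinite A"
  then obtain C where C: "C \<subseteq> A" "countable C" "infinite C"
    using infinite_countable_subset' by blast
  have At: "A \<subseteq> topspace X" using K compactin_subset_topspace by blast
  have loc: "\<exists>V. openin X V \<and> x \<in> V \<and> finite (V \<inter> C)" if x: "x \<in> topspace X" for x
  proof -
    define T where "T = insert (topspace X) ((\<lambda>c. topspace X - {c}) ` (C - {x}))"
    have "countable T" unfolding T_def using C by simp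
    moreover have "T \<subseteq> Collect (openin X)"
      unfolding T_def using C At T1
      by (auto intro!: openin_diff closedin_t1_singleton)
    moreover have "\<Inter>T = topspace X - (C - {x})" unfolding T_def by auto
    ultimately have "gdelta_in X (topspace X - (C - {x}))"
      unfolding gdelta_in_alt intersection_of_def by blast
    then obtain V where V: "openin X V" "x \<in> V" "V \<subseteq> topspace X - (C - {x})"
      using p_space_interior[OF P] x by blast
    then have "V \<inter> C \<subseteq> {x}" by blast
    then have "finite (V \<inter> C)" using finite_subset by blast
    with V show ?thesis by blast
  qed
  define U where "U = {V. openin X V \<and> finite (V \<inter> C)}"
  have "A \<subseteq> \<Union>U" using loc At unfolding U_def by blast
  moreover have "\<forall>V\<in>U. openin X V" unfolding U_def by blast
  ultimately obtain F where F: "finite F" "F \<subseteq> U" "A \<subseteq> \<Union>F"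
    using K unfolding compactin_def by meson
  have "C = (\<Union>V\<in>F. V \<inter> C)" using F C by blast
  moreover have "finite (\<Union>V\<in>F. V \<inter> C)" using F unfolding U_def by blast
  ultimately show False using C by simp
qed

lemma p_space_zero_open:
  assumes P: "p_space Y" and g: "continuous_map Y euclideanreal g"
  shows "openin Y {x \<in> topspace Y. g x = 0}"
proof -
  define T where "T = range (\<lambda>n::nat. {x \<in> topspace Y. \<bar>g x\<bar> < inverse (real (Suc n))})"
  have "countable T" unfolding T_def by simp
  moreover have "T \<subseteq> Collect (openin Y)"
  proof -
    have "openin Y {x \<in> topspace Y. \<bar>g x\<bar> < inverse (real (Suc n))}" for n
    proof -
      have "continuous_map Y euclideanreal (\<lambda>x. \<bar>g x\<bar>)" using g by (rule continuous_map_real_abs)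
      then have "\<forall>a. openin Y {x \<in> topspace Y. \<bar>g x\<bar> < a}"
        by (simp add: continuous_map_upper_lower_semicontinuous_lt)
      then show ?thesis by blast
    qed
    then show ?thesis unfolding T_def by blast
  qed
  moreover have "\<Inter>T = {x \<in> topspace Y. g x = 0}"
  proof
    show "{x \<in> topspace Y. g x = 0} \<subseteq> \<Inter>T" unfolding T_def by auto
    show "\<Inter>T \<subseteq> {x \<in> topspace Y. g x = 0}"
    proof
      fix x assume x: "x \<in> \<Inter>T"
      then have "x \<in> topspace Y" unfolding T_def by auto
      moreover have "\<bar>g x\<bar> < inverse (real (Suc n))" for n using x unfolding T_def by auto
      then have "g x = 0"
      proof -
        have "\<not> 0 < \<bar>g x\<bar>"
        proof
          assume "0 < \<bar>g x\<bar>"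
          then obtain n where "inverse (real (Suc n)) < \<bar>g x\<bar>" using reals_Archimedean by blast
          with \<open>\<And>n. \<bar>g x\<bar> < inverse (real (Suc n))\<close>[of n] show False by simp
        qed
        then show ?thesis by simp
      qed
      ultimately show "x \<in> {x \<in> topspace Y. g x = 0}" by simp
    qed
  qed
  ultimately have gd: "gdelta_in Y {x \<in> topspace Y. g x = 0}"
    unfolding gdelta_in_alt intersection_of_def by blast
  show ?thesis
    by (rule openin_subopen[THEN iffD2]) (use p_space_interior[OF P gd] in blast)
qed

lemma p_space_clopen_base:
  assumes P: "p_space X" and CR: "completely_regular_space X" and U: "openin X U" "x \<in> U"
  shows "\<exists>C. openin X C \<and> closedin X C \<and> x \<in> C \<and> C \<subseteq> U"
proof -
  have h: "closedin X (topspace X - U) \<and> x \<in> topspace X - (topspace X - U)"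
    using U openin_subset by (auto intro: closedin_diff)
  obtain f where f0: "continuous_map X (top_of_set {0::real..1}) f \<and> f x = 0 \<and> f ` (topspace X - U) \<subseteq> {1}"
    using CR[unfolded completely_regular_space_def, rule_format, OF h] by (rule exE)
  have f: "continuous_map X (top_of_set {0::real..1}) f" "f x = 0" "f ` (topspace X - U) \<subseteq> {1}"
    using f0 by simp_all
  have fe: "continuous_map X euclideanreal f" using f(1) by (simp add: continuous_map_in_subtopology)
  define C where "C = {y \<in> topspace X. f y = 0}"
  have "openin X C" unfolding C_def by (rule p_space_zero_open[OF P fe])
  moreover have "closedin X C" unfolding C_def
    using closedin_continuous_map_preimage[OF fe, of "{0}"] by (simp add: vimage_def Int_def conj_commute)
  moreover have "x \<in> C" using h f unfolding C_def by auto
  moreover have "C \<subseteq> U" using f(3) unfolding C_def by force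
  ultimately show ?thesis by blast
qed

lemma top_sub_H: "H \<subseteq> hyp_K X \<Longrightarrow> topspace (subtopology (vietoris X) H) = H"
  by (auto simp: topspace_vietoris)

lemma sing_in_H:
  assumes "hyp_F 2 X \<subseteq> H" "x \<in> topspace X" shows "{x} \<in> H"
proof -
  have "{x} \<in> hyp_F 2 X" using assms(2) by (simp add: hyp_F_def)
  then show ?thesis using assms(1) by (rule subsetD[rotated])
qed

lemma pair_in_H:
  assumes "hyp_F 2 X \<subseteq> H" "x \<in> topspace X" "y \<in> topspace X" shows "{x, y} \<in> H"
proof -
  have "card {x, y} \<le> 2" by (simp add: card_insert_if)
  then have "{x, y} \<in> hyp_F 2 X" using assms(2,3) by (simp add: hyp_F_def)
  then show ?thesis using assms(1) by (rule subsetD[rotated])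
qed

lemma a_imp_b:
  assumes T1: "t1_space X" and P: "p_space X" and HK: "H \<subseteq> hyp_K X"
  shows "p_space (subtopology (vietoris X) H)"
  unfolding p_space_def
proof
  let ?Y = "subtopology (vietoris X) H"
  fix A assume A: "A \<in> topspace ?Y"
  then have AH: "A \<in> H" by (simp add: top_sub_H[OF HK])
  then have AK: "A \<in> hyp_K X" using HK by blast
  then have Ane: "A \<noteq> {}" and Ac: "compactin X A" by (auto simp: hyp_K_def)
  then have At: "A \<subseteq> topspace X" by (simp add: compactin_subset_topspace)
  have Afin: "finite A" using p_space_compact_finite[OF P T1 Ac] .
  show "p_point ?Y A" unfolding p_point_def
  proof (intro conjI allI impI)
    show "A \<in> topspace ?Y" by fact
    fix GG assume GG: "gdelta_in ?Y GG \<and> A \<in> GG"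
    then obtain T where T: "countable T" "T \<subseteq> Collect (openin ?Y)" "\<Inter>T = GG"
      unfolding gdelta_in_alt intersection_of_def by blast
    have ex1: "\<forall>W\<in>T. \<exists>Q. (\<forall>a\<in>A. openin X (Q a) \<and> a \<in> Q a) \<and> H \<inter> NB X A Q \<subseteq> W"
    proof
      fix W assume W: "W \<in> T"
      then have "openin ?Y W" using T by blast
      then obtain W' where W': "openin (vietoris X) W'" "W = W' \<inter> H"
        unfolding openin_subtopology by blast
      have "A \<in> W" using W T GG by blast
      then have "A \<in> W'" using W' by blast
      then obtain Q where Q: "\<forall>a\<in>A. openin X (Q a) \<and> a \<in> Q a" "NB X A Q \<subseteq> W'"
        using local_base[OF W'(1)] by blast
      then have "H \<inter> NB X A Q \<subseteq> W" using W' by blast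
      with Q(1) show "\<exists>Q. (\<forall>a\<in>A. openin X (Q a) \<and> a \<in> Q a) \<and> H \<inter> NB X A Q \<subseteq> W"
        by (intro exI[of _ Q]) simp
    qed
    obtain QQ where QQ: "\<forall>W\<in>T. (\<forall>a\<in>A. openin X (QQ W a) \<and> a \<in> QQ W a) \<and> H \<inter> NB X A (QQ W) \<subseteq> W"
      using bchoice[OF ex1] by (rule exE)
    have ex2: "\<forall>a\<in>A. \<exists>V. openin X V \<and> a \<in> V \<and> V \<subseteq> topspace X \<inter> \<Inter>((\<lambda>W. QQ W a) ` T)"
    proof
      fix a assume a: "a \<in> A"
      define TT where "TT = insert (topspace X) ((\<lambda>W. QQ W a) ` T)"
      have "countable TT" unfolding TT_def using T by simp
      moreover have "TT \<subseteq> Collect (openin X)" unfolding TT_def using QQ a by auto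
      moreover have "\<Inter>TT = topspace X \<inter> \<Inter>((\<lambda>W. QQ W a) ` T)" unfolding TT_def by simp
      ultimately have "gdelta_in X (topspace X \<inter> \<Inter>((\<lambda>W. QQ W a) ` T))"
        unfolding gdelta_in_alt intersection_of_def by blast
      moreover have "a \<in> topspace X \<inter> \<Inter>((\<lambda>W. QQ W a) ` T)" using QQ a At by blast
      ultimately show "\<exists>V. openin X V \<and> a \<in> V \<and> V \<subseteq> topspace X \<inter> \<Inter>((\<lambda>W. QQ W a) ` T)"
        using p_space_interior[OF P] by blast
    qed
    obtain PP where PP: "\<forall>a\<in>A. openin X (PP a) \<and> a \<in> PP a \<and> PP a \<subseteq> topspace X \<inter> \<Inter>((\<lambda>W. QQ W a) ` T)"
      using bchoice[OF ex2] by (rule exE)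
    define N where "N = H \<inter> NB X A PP"
    have "openin ?Y N" unfolding N_def
      by (rule openin_subtopology_Int2, rule NB_open) (use Afin Ane PP in auto)
    moreover have "A \<in> N" unfolding N_def using AH AK PP by (simp add: NB_self)
    moreover have "N \<subseteq> GG"
    proof -
      have "N \<subseteq> W" if W: "W \<in> T" for W
      proof -
        have "NB X A PP \<subseteq> NB X A (QQ W)" by (rule NB_mono) (use PP W in blast)
        then show ?thesis unfolding N_def using QQ W by blast
      qed
      then show ?thesis using T by blast
    qed
    ultimately show "A \<in> ?Y interior_of GG" unfolding interior_of_def by blast
  qed
qed

lemma b_imp_a:
  assumes P: "p_space (subtopology (vietoris X) H)" and F2: "hyp_F 2 X \<subseteq> H" and HK: "H \<subseteq> hyp_K X"
  shows "p_space X"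
  unfolding p_space_def p_point_def
proof (intro ballI conjI allI impI)
  let ?Y = "subtopology (vietoris X) H"
  fix x G assume x: "x \<in> topspace X" and G: "gdelta_in X G \<and> x \<in> G"
  obtain T where T: "countable T" "T \<subseteq> Collect (openin X)" "\<Inter>T = G"
    using G unfolding gdelta_in_alt intersection_of_def by blast
  define TT where "TT = insert H ((\<lambda>U. H \<inter> {B \<in> hyp_K X. B \<subseteq> U}) ` T)"
  have c: "countable TT" unfolding TT_def using T(1) by simp
  have o: "TT \<subseteq> Collect (openin ?Y)"
  proof -
    have "openin ?Y H" by (metis openin_topspace top_sub_H[OF HK])
    moreover have "openin ?Y (H \<inter> {B \<in> hyp_K X. B \<subseteq> U})" if "U \<in> T" for U
    proof -
      have "openin X U" using that T(2) by blast
      then show ?thesis by (intro openin_subtopology_Int2 openin_plus)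
    qed
    ultimately show ?thesis unfolding TT_def by blast
  qed
  have sub: "\<Inter>TT \<subseteq> topspace ?Y" unfolding top_sub_H[OF HK] TT_def by blast
  have gd: "gdelta_in ?Y (\<Inter>TT)"
    unfolding gdelta_in_alt intersection_of_def using c o sub by blast
  have xK: "{x} \<in> hyp_K X" using x by (simp add: hyp_K_def)
  have xH: "{x} \<in> H" using sing_in_H[OF F2 x] .
  have "\<forall>U\<in>T. x \<in> U" using G T(3) by blast
  then have xT: "{x} \<in> \<Inter>TT" using xK xH unfolding TT_def by blast
  obtain W where W: "openin ?Y W" "{x} \<in> W" "W \<subseteq> \<Inter>TT"
    using p_space_interior[OF P gd xT] by blast
  obtain W' where W': "openin (vietoris X) W'" "W = W' \<inter> H"
    using W(1) unfolding openin_subtopology by blast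
  have "{x} \<in> W'" using W W' by blast
  then obtain Q where Q: "\<forall>a\<in>{x}. openin X (Q a) \<and> a \<in> Q a" "NB X {x} Q \<subseteq> W'"
    using local_base[OF W'(1)] by blast
  have Qx: "openin X (Q x)" "x \<in> Q x" using Q(1) by auto
  have "Q x \<subseteq> G"
  proof
    fix y assume y: "y \<in> Q x"
    then have yt: "y \<in> topspace X" using Qx openin_subset by blast
    have "{y} \<in> NB X {x} Q" using y yt unfolding NB_def by (simp add: hyp_K_def)
    then have "{y} \<in> W'" using Q(2) by blast
    then have "{y} \<in> W" using W'(2) sing_in_H[OF F2 yt] by blast
    then have "{y} \<in> \<Inter>TT" using W(3) by blast
    then have "\<forall>U\<in>T. {y} \<in> H \<inter> {B \<in> hyp_K X. B \<subseteq> U}" unfolding TT_def by blast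
    then have "\<forall>U\<in>T. y \<in> U" by blast
    then show "y \<in> G" using T(3) by blast
  qed
  then show "x \<in> X interior_of G" unfolding interior_of_def using Qx by blast
next
  fix x assume "x \<in> topspace X" then show "x \<in> topspace X" .
qed

lemma p_space_cozero_closed:
  assumes P: "p_space Y" and C: "cozero_set Y C"
  shows "closedin Y C"
proof -
  obtain f where f: "continuous_map Y euclideanreal f" "C = {x \<in> topspace Y. f x \<noteq> 0}"
    using C unfolding cozero_set_def by blast
  have "openin Y {x \<in> topspace Y. f x = 0}" by (rule p_space_zero_open[OF P f(1)])
  moreover have "topspace Y - C = {x \<in> topspace Y. f x = 0}" using f by auto
  ultimately show ?thesis unfolding closedin_def using f by auto
qed

lemma b_imp_c:
  assumes P: "p_space (subtopology (vietoris X) H)" and TX: "tychonoff_space X"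
    and F2: "hyp_F 2 X \<subseteq> H" and HK: "H \<subseteq> hyp_K X"
  shows "f_prime_space (subtopology (vietoris X) H)"
proof -
  let ?Y = "subtopology (vietoris X) H"
  have PX: "p_space X" by (rule b_imp_a[OF P F2 HK])
  have CRX: "completely_regular_space X" and T1: "t1_space X"
    using TX by (auto simp: tychonoff_space_def)
  have base: "\<exists>U. (closedin ?Y U \<and> openin ?Y U) \<and> A \<in> U \<and> U \<subseteq> W"
    if W: "openin ?Y W" "A \<in> W" for W A
  proof -
    obtain W' where W': "openin (vietoris X) W'" "W = W' \<inter> H"
      using W unfolding openin_subtopology by blast
    have AH: "A \<in> H" and AW': "A \<in> W'" using W W' by auto
    then have AK: "A \<in> hyp_K X" using HK by blast
    then have Ane: "A \<noteq> {}" and Ac: "compactin X A" by (auto simp: hyp_K_def)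
    then have At: "A \<subseteq> topspace X" by (simp add: compactin_subset_topspace)
    have Afin: "finite A" using p_space_compact_finite[OF PX T1 Ac] .
    obtain Q where Q: "\<forall>a\<in>A. openin X (Q a) \<and> a \<in> Q a" "NB X A Q \<subseteq> W'"
      using local_base[OF W'(1) AW'] by blast
    have ex1: "\<forall>a\<in>A. \<exists>C. openin X C \<and> closedin X C \<and> a \<in> C \<and> C \<subseteq> Q a"
      using Q(1) p_space_clopen_base[OF PX CRX] by blast
    obtain CC where CC: "\<forall>a\<in>A. openin X (CC a) \<and> closedin X (CC a) \<and> a \<in> CC a \<and> CC a \<subseteq> Q a"
      using bchoice[OF ex1] by (rule exE)
    define U where "U = H \<inter> NB X A CC"
    have "openin ?Y U" unfolding U_def
      by (rule openin_subtopology_Int2, rule NB_open) (use Afin Ane CC in auto)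
    moreover have "closedin ?Y U" unfolding U_def
      by (rule closedin_subtopology_Int_closed, rule NB_closed) (use Afin Ane CC in auto)
    moreover have "A \<in> U" unfolding U_def using AH AK CC by (simp add: NB_self)
    moreover have "U \<subseteq> W"
    proof -
      have "NB X A CC \<subseteq> NB X A Q" by (rule NB_mono) (use CC in blast)
      then show ?thesis unfolding U_def using Q W' by blast
    qed
    ultimately show ?thesis by blast
  qed
  have "?Y dim_le 0"
    unfolding dimension_le_0_neighbourhood_base_of_clopen
    by (subst open_neighbourhood_base_of) (use base in auto)
  then have CRY: "completely_regular_space ?Y" by (rule zero_dimensional_imp_completely_regular_space)
  have T1Y: "t1_space ?Y"
    unfolding t1_space_def
  proof (intro ballI impI)
    fix A B assume A: "A \<in> topspace ?Y" and B: "B \<in> topspace ?Y" and AB: "A \<noteq> B"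
    then have AH: "A \<in> H" and BH: "B \<in> H" by (auto simp: top_sub_H[OF HK])
    then have AK: "A \<in> hyp_K X" and BK: "B \<in> hyp_K X" using HK by auto
    then have At: "A \<subseteq> topspace X" and Bt: "B \<subseteq> topspace X"
      by (auto simp: hyp_K_def compactin_subset_topspace)
    have Bfin: "finite B" using p_space_compact_finite[OF PX T1] BK by (auto simp: hyp_K_def)
    show "\<exists>U. openin ?Y U \<and> A \<in> U \<and> B \<notin> U"
    proof (cases "B \<subseteq> A")
      case False
      then obtain b where b: "b \<in> B" "b \<notin> A" by blast
      have "openin X (topspace X - {b})" using T1 b Bt by (intro openin_diff closedin_t1_singleton) auto
      then have "openin ?Y (H \<inter> {C \<in> hyp_K X. C \<subseteq> topspace X - {b}})"
        by (intro openin_subtopology_Int2 openin_plus)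
      moreover have "A \<in> H \<inter> {C \<in> hyp_K X. C \<subseteq> topspace X - {b}}" using AH AK At b by blast
      moreover have "B \<notin> H \<inter> {C \<in> hyp_K X. C \<subseteq> topspace X - {b}}" using b by blast
      ultimately show ?thesis by blast
    next
      case True
      then obtain a where a: "a \<in> A" "a \<notin> B" using AB by blast
      have "closedin X B" using T1 Bfin Bt by (simp add: t1_space_closedin_finite)
      then have "openin X (topspace X - B)" by (intro openin_diff) auto
      then have "openin ?Y (H \<inter> {C \<in> hyp_K X. C \<inter> (topspace X - B) \<noteq> {}})"
        by (intro openin_subtopology_Int2 openin_minus)
      moreover have "A \<in> H \<inter> {C \<in> hyp_K X. C \<inter> (topspace X - B) \<noteq> {}}" using AH AK At a by blast
      moreover have "B \<notin> H \<inter> {C \<in> hyp_K X. C \<inter> (topspace X - B) \<noteq> {}}" by blast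
      ultimately show ?thesis by blast
    qed
  qed
  show ?thesis
    unfolding f_prime_space_def tychonoff_space_def
  proof (intro conjI CRY T1Y allI impI)
    fix C D assume CD: "cozero_set ?Y C \<and> cozero_set ?Y D \<and> C \<inter> D = {}"
    then have "closedin ?Y C" "closedin ?Y D" using p_space_cozero_closed[OF P] by auto
    then have "?Y closure_of C = C" "?Y closure_of D = D" by (simp_all add: closure_of_eq)
    then show "?Y closure_of C \<inter> ?Y closure_of D = {}" using CD by simp
  qed
qed

lemma F_exists:
  assumes CR: "completely_regular_space X" and G: "gdelta_in X G" and p: "p \<in> G"
  shows "\<exists>F. continuous_map X euclideanreal F \<and> F p = 0 \<and> (\<forall>x\<in>topspace X. 0 \<le> F x)
             \<and> (\<forall>x\<in>topspace X - G. 0 < F x)"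
proof -
  obtain T where T: "countable T" "T \<subseteq> Collect (openin X)" "\<Inter>T = G"
    using G unfolding gdelta_in_alt intersection_of_def by blast
  show ?thesis
  proof (cases "T = {}")
    case True
    then have "topspace X - G = {}" using T by auto
    then show ?thesis by (intro exI[of _ "\<lambda>x. 0"]) auto
  next
    case False
    define U where "U = from_nat_into T"
    have rU: "range U = T" unfolding U_def using False T(1) by simp
    have ex: "\<forall>n. \<exists>f. continuous_map X (top_of_set {0::real..1}) f \<and> f p = 0 \<and> f ` (topspace X - U n) \<subseteq> {1}"
    proof
      fix n
      have Un: "U n \<in> T" using rU by blast
      then have "openin X (U n)" using T by blast
      moreover have "p \<in> U n" using Un T p by blast
      ultimately have h: "closedin X (topspace X - U n) \<and> p \<in> topspace X - (topspace X - U n)"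
        using openin_subset by (auto intro: closedin_diff)
      show "\<exists>f. continuous_map X (top_of_set {0::real..1}) f \<and> f p = 0 \<and> f ` (topspace X - U n) \<subseteq> {1}"
        using CR[unfolded completely_regular_space_def, rule_format, OF h] .
    qed
    obtain ff where ff: "\<forall>n. continuous_map X (top_of_set {0::real..1}) (ff n) \<and> ff n p = 0 \<and> ff n ` (topspace X - U n) \<subseteq> {1}"
      using choice[OF ex] by (rule exE)
    have ffc: "continuous_map X euclideanreal (ff n)" for n
      using ff by (simp add: continuous_map_in_subtopology)
    have ff01: "0 \<le> ff n x \<and> ff n x \<le> 1" if "x \<in> topspace X" for n x
    proof -
      have "ff n \<in> topspace X \<rightarrow> {0..1}" using ff by (simp add: continuous_map_in_subtopology)
      then show ?thesis using that by (auto simp: Pi_iff)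
    qed
    define a where "a n x = (1/2::real)^n * ff n x" for n x
    have a_nn: "0 \<le> a n x" if "x \<in> topspace X" for n x
      unfolding a_def using ff01[OF that] by simp
    have a_le: "a n x \<le> (1/2)^n" if "x \<in> topspace X" for n x
      unfolding a_def using ff01[OF that, of n] by (simp add: mult_left_le)
    have sg: "summable (\<lambda>n. (1/2::real)^n)" by (rule summable_geometric) simp
    have sa: "summable (\<lambda>n. a n x)" if "x \<in> topspace X" for x
      by (rule summable_comparison_test'[OF sg]) (use a_nn[OF that] a_le[OF that] in simp)
    define F where "F x = (\<Sum>n. a n x)" for x
    have Fp: "F p = 0" unfolding F_def a_def using ff by simp
    have Fnn: "\<forall>x\<in>topspace X. 0 \<le> F x"
      unfolding F_def using sa a_nn by (simp add: suminf_nonneg)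
    have Fpos: "\<forall>x\<in>topspace X - G. 0 < F x"
    proof
      fix x assume x: "x \<in> topspace X - G"
      then obtain n where "x \<notin> U n" using T rU by blast
      then have "ff n x = 1" using ff x by blast
      then have "0 < a n x" unfolding a_def by simp
      then show "0 < F x" unfolding F_def using x sa a_nn by (intro suminf_pos2) auto
    qed
    have tail: "\<bar>F x - (\<Sum>n<N. a n x)\<bar> \<le> 2 * (1/2)^N" if x: "x \<in> topspace X" for x N
    proof -
      have "F x - (\<Sum>n<N. a n x) = (\<Sum>n. a (n + N) x)"
        unfolding F_def using suminf_minus_initial_segment[OF sa[OF x], of N] by simp
      also have "\<dots> \<le> (\<Sum>n. (1/2::real)^(n + N))"
      proof (rule suminf_le)
        show "a (n + N) x \<le> (1/2)^(n + N)" for n using a_le[OF x] .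
        show "summable (\<lambda>n. a (n + N) x)" using sa[OF x] summable_iff_shift[where f="\<lambda>m. a m x"] by simp
        show "summable (\<lambda>n. (1/2::real)^(n + N))" using sg summable_iff_shift[where f="\<lambda>m. (1/2::real)^m"] by simp
      qed
      also have "\<dots> = (1/2)^N * (\<Sum>n. (1/2::real)^n)"
        using suminf_mult[OF sg, of "(1/2)^N"] by (simp add: power_add mult.commute)
      also have "\<dots> = 2 * (1/2)^N" by (simp add: suminf_geometric)
      finally have "F x - (\<Sum>n<N. a n x) \<le> 2 * (1/2)^N" .
      moreover have "0 \<le> F x - (\<Sum>n<N. a n x)"
      proof -
        have "summable (\<lambda>n. a (n + N) x)" using sa[OF x] summable_iff_shift[where f="\<lambda>m. a m x"] by simp
        then have "0 \<le> (\<Sum>n. a (n + N) x)" using a_nn[OF x] by (simp add: suminf_nonneg)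
        then show ?thesis using suminf_minus_initial_segment[OF sa[OF x], of N] unfolding F_def by simp
      qed
      ultimately show ?thesis by simp
    qed
    have "continuous_map X Met_TC.mtopology F"
    proof (rule Met_TC.continuous_map_uniform_limit[where F=sequentially and f="\<lambda>N x. \<Sum>n<N. a n x"])
      show "\<forall>\<^sub>F N in sequentially. continuous_map X Met_TC.mtopology (\<lambda>x. \<Sum>n<N. a n x)"
      proof (rule always_eventually, rule allI)
        fix N
        have "continuous_map X euclideanreal (\<lambda>x. \<Sum>n<N. a n x)"
          unfolding a_def by (intro continuous_map_sum continuous_map_real_mult_left ffc) auto
        then show "continuous_map X Met_TC.mtopology (\<lambda>x. \<Sum>n<N. a n x)" by simp
      qed
      show "\<forall>\<^sub>F N in sequentially. \<forall>x\<in>topspace X. F x \<in> UNIV \<and> dist (\<Sum>n<N. a n x) (F x) < e"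
        if e: "0 < e" for e
      proof -
        obtain N0 where N0: "(1/2::real)^N0 < e/2" using real_arch_pow_inv[of "e/2" "1/2"] e by auto
        show ?thesis
        proof (rule eventually_sequentiallyI[of N0])
          fix N assume N: "N0 \<le> N"
          have "(1/2::real)^N \<le> (1/2)^N0" using N by (simp add: power_decreasing)
          then have "2 * (1/2::real)^N < e" using N0 by linarith
          then show "\<forall>x\<in>topspace X. F x \<in> UNIV \<and> dist (\<Sum>n<N. a n x) (F x) < e"
            using tail by (auto simp: dist_real_def abs_minus_commute intro: le_less_trans)
        qed
      qed
    qed simp
    then have "continuous_map X euclideanreal F" by simp
    then show ?thesis using Fp Fnn Fpos by blast
  qed
qed

lemma compact_image_facts:
  assumes F: "continuous_map X euclideanreal F" and A: "A \<in> hyp_K X"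
  shows "compact (F ` A)" "F ` A \<noteq> {}"
proof -
  have "compactin X A" "A \<noteq> {}" using A by (auto simp: hyp_K_def)
  then show "compact (F ` A)" using image_compactin[OF _ F] by auto
  show "F ` A \<noteq> {}" using \<open>A \<noteq> {}\<close> by simp
qed

lemma sup_facts:
  assumes F: "continuous_map X euclideanreal F" and A: "A \<in> hyp_K X"
  shows "a < Sup (F ` A) \<longleftrightarrow> A \<inter> {y \<in> topspace X. a < F y} \<noteq> {}"
    and "Sup (F ` A) < a \<longleftrightarrow> A \<subseteq> {y \<in> topspace X. F y < a}"
    and "Inf (F ` A) < a \<longleftrightarrow> A \<inter> {y \<in> topspace X. F y < a} \<noteq> {}"
    and "a < Inf (F ` A) \<longleftrightarrow> A \<subseteq> {y \<in> topspace X. a < F y}"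
proof -
  have c: "compact (F ` A)" and ne: "F ` A \<noteq> {}" using compact_image_facts[OF F A] by auto
  have At: "A \<subseteq> topspace X" using A hyp_K_sub by blast
  have ba: "bdd_above (F ` A)" and bb: "bdd_below (F ` A)"
    using compact_imp_bounded[OF c] by (auto intro: bounded_imp_bdd_above bounded_imp_bdd_below)
  obtain s where s: "s \<in> F ` A" "\<forall>t\<in>F ` A. t \<le> s" using compact_attains_sup[OF c ne] by blast
  obtain i where i: "i \<in> F ` A" "\<forall>t\<in>F ` A. i \<le> t" using compact_attains_inf[OF c ne] by blast
  have Ss: "Sup (F ` A) = s" using s by (intro cSup_eq_maximum) auto
  have Ii: "Inf (F ` A) = i" using i by (intro cInf_eq_minimum) auto
  show "a < Sup (F ` A) \<longleftrightarrow> A \<inter> {y \<in> topspace X. a < F y} \<noteq> {}"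
    using less_cSup_iff[OF ne ba, of a] At by auto
  show "Sup (F ` A) < a \<longleftrightarrow> A \<subseteq> {y \<in> topspace X. F y < a}"
    unfolding Ss using s At by fastforce
  show "Inf (F ` A) < a \<longleftrightarrow> A \<inter> {y \<in> topspace X. F y < a} \<noteq> {}"
    using cInf_less_iff[OF ne bb, of a] At by auto
  show "a < Inf (F ` A) \<longleftrightarrow> A \<subseteq> {y \<in> topspace X. a < F y}"
    unfolding Ii using i At by fastforce
qed

lemma sup_inf_cont:
  assumes F: "continuous_map X euclideanreal F" and HK: "H \<subseteq> hyp_K X"
  shows "continuous_map (subtopology (vietoris X) H) euclideanreal (\<lambda>A. Sup (F ` A))"
    and "continuous_map (subtopology (vietoris X) H) euclideanreal (\<lambda>A. Inf (F ` A))"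
proof -
  let ?Y = "subtopology (vietoris X) H"
  have o1: "openin X {y \<in> topspace X. a < F y}" "openin X {y \<in> topspace X. F y < a}" for a
    using F by (simp_all add: continuous_map_upper_lower_semicontinuous_lt)
  have tY: "topspace ?Y = H" by (rule top_sub_H[OF HK])
  have e1: "{A \<in> topspace ?Y. a < Sup (F ` A)} = H \<inter> {A \<in> hyp_K X. A \<inter> {y \<in> topspace X. a < F y} \<noteq> {}}" for a
    unfolding tY using sup_facts(1)[OF F] HK by blast
  have e2: "{A \<in> topspace ?Y. Sup (F ` A) < a} = H \<inter> {A \<in> hyp_K X. A \<subseteq> {y \<in> topspace X. F y < a}}" for a
    unfolding tY using sup_facts(2)[OF F] HK by blast
  have e3: "{A \<in> topspace ?Y. Inf (F ` A) < a} = H \<inter> {A \<in> hyp_K X. A \<inter> {y \<in> topspace X. F y < a} \<noteq> {}}" for a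
    unfolding tY using sup_facts(3)[OF F] HK by blast
  have e4: "{A \<in> topspace ?Y. a < Inf (F ` A)} = H \<inter> {A \<in> hyp_K X. A \<subseteq> {y \<in> topspace X. a < F y}}" for a
    unfolding tY using sup_facts(4)[OF F] HK by blast
  show "continuous_map ?Y euclideanreal (\<lambda>A. Sup (F ` A))"
    unfolding continuous_map_upper_lower_semicontinuous_lt e1 e2
    using o1 by (auto intro!: openin_subtopology_Int2 openin_plus openin_minus)
  show "continuous_map ?Y euclideanreal (\<lambda>A. Inf (F ` A))"
    unfolding continuous_map_upper_lower_semicontinuous_lt e3 e4
    using o1 by (auto intro!: openin_subtopology_Int2 openin_plus openin_minus)
qed

lemma c_imp_a:
  assumes FP: "f_prime_space (subtopology (vietoris X) H)" and TX: "tychonoff_space X"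
    and F2: "hyp_F 2 X \<subseteq> H" and HK: "H \<subseteq> hyp_K X"
  shows "p_space X"
proof (rule ccontr)
  let ?Y = "subtopology (vietoris X) H"
  assume "\<not> p_space X"
  then obtain p G where pt: "p \<in> topspace X" and G: "gdelta_in X G" "p \<in> G"
    and np: "p \<notin> X interior_of G"
    unfolding p_space_def p_point_def by blast
  have CRX: "completely_regular_space X" using TX by (simp add: tychonoff_space_def)
  obtain F where Fc: "continuous_map X euclideanreal F" and Fp: "F p = 0"
    and Fnn: "\<forall>x\<in>topspace X. 0 \<le> F x" and Fpos: "\<forall>x\<in>topspace X - G. 0 < F x"
    using F_exists[OF CRX G] by blast
  define S where "S A = Sup (F ` A)" for A
  define I where "I A = Inf (F ` A)" for A
  have Sc: "continuous_map ?Y euclideanreal S" unfolding S_def by (rule sup_inf_cont(1)[OF Fc HK])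
  have Ic: "continuous_map ?Y euclideanreal I" unfolding I_def by (rule sup_inf_cont(2)[OF Fc HK])
  define u where "u A = max 0 (S A - 2 * I A)" for A
  define v where "v A = max 0 (2 * I A - S A)" for A
  have uc: "continuous_map ?Y euclideanreal u" unfolding u_def
    by (intro continuous_map_real_max continuous_map_const[THEN iffD2] continuous_map_diff
        continuous_map_real_mult_left Sc Ic) simp
  have vc: "continuous_map ?Y euclideanreal v" unfolding v_def
    by (intro continuous_map_real_max continuous_map_const[THEN iffD2] continuous_map_diff
        continuous_map_real_mult_left Sc Ic) simp
  define C where "C = {A \<in> topspace ?Y. u A \<noteq> 0}"
  define D where "D = {A \<in> topspace ?Y. v A \<noteq> 0}"
  have cC: "cozero_set ?Y C" unfolding cozero_set_def C_def using uc by blast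
  have cD: "cozero_set ?Y D" unfolding cozero_set_def D_def using vc by blast
  have CD: "C \<inter> D = {}" unfolding C_def D_def u_def v_def by auto
  have disj: "?Y closure_of C \<inter> ?Y closure_of D = {}"
    using FP cC cD CD unfolding f_prime_space_def by blast
  have pK: "{p} \<in> hyp_K X" using pt by (simp add: hyp_K_def)
  have pH: "{p} \<in> H" using sing_in_H[OF F2 pt] .
  have key: "\<exists>x. x \<in> topspace X \<and> F x > 0 \<and> {x} \<in> W \<and> {p, x} \<in> W"
    if W: "openin ?Y W" "{p} \<in> W" for W
  proof -
    obtain W' where W': "openin (vietoris X) W'" "W = W' \<inter> H"
      using W(1) unfolding openin_subtopology by blast
    have "{p} \<in> W'" using W W' by blast
    then obtain Q where Q: "\<forall>a\<in>{p}. openin X (Q a) \<and> a \<in> Q a" "NB X {p} Q \<subseteq> W'"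
      using local_base[OF W'(1)] by blast
    have Qp: "openin X (Q p)" "p \<in> Q p" using Q(1) by auto
    have "\<not> Q p \<subseteq> G" using np Qp unfolding interior_of_def by blast
    then obtain x where x: "x \<in> Q p" "x \<notin> G" by blast
    have xt: "x \<in> topspace X" using x Qp openin_subset by blast
    have Fx: "F x > 0" using Fpos x xt by blast
    have "{x} \<in> NB X {p} Q" using x xt unfolding NB_def by (simp add: hyp_K_def)
    then have "{x} \<in> W" using Q(2) W'(2) sing_in_H[OF F2 xt] by blast
    moreover have "{p, x} \<in> NB X {p} Q"
      using x xt pt Qp unfolding NB_def by (simp add: hyp_K_def finite_imp_compactin)
    then have "{p, x} \<in> W" using Q(2) W'(2) pair_in_H[OF F2 pt xt] by blast
    ultimately show ?thesis using xt Fx by blast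
  qed
  have "{p} \<in> ?Y closure_of C"
    unfolding in_closure_of
  proof (intro conjI allI impI)
    show "{p} \<in> topspace ?Y" unfolding top_sub_H[OF HK] by (rule pH)
    fix W assume "{p} \<in> W \<and> openin ?Y W"
    then obtain x where x: "x \<in> topspace X" "F x > 0" "{p, x} \<in> W" using key by blast
    have "F ` {p, x} = {0, F x}" using Fp by simp
    then have "S {p, x} = F x" "I {p, x} = 0" unfolding S_def I_def using x(2)
      by (auto intro!: cSup_eq_maximum cInf_eq_minimum)
    then have "u {p, x} \<noteq> 0" unfolding u_def using x(2) by simp
    moreover have "{p, x} \<in> topspace ?Y" unfolding top_sub_H[OF HK] by (rule pair_in_H[OF F2 pt x(1)])
    ultimately show "\<exists>y. y \<in> C \<and> y \<in> W" unfolding C_def using x(3) by blast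
  qed
  moreover have "{p} \<in> ?Y closure_of D"
    unfolding in_closure_of
  proof (intro conjI allI impI)
    show "{p} \<in> topspace ?Y" unfolding top_sub_H[OF HK] by (rule pH)
    fix W assume "{p} \<in> W \<and> openin ?Y W"
    then obtain x where x: "x \<in> topspace X" "F x > 0" "{x} \<in> W" using key by blast
    have "S {x} = F x" "I {x} = F x" unfolding S_def I_def by simp_all
    then have "v {x} \<noteq> 0" unfolding v_def using x(2) by simp
    moreover have "{x} \<in> topspace ?Y" unfolding top_sub_H[OF HK] by (rule sing_in_H[OF F2 x(1)])
    ultimately show "\<exists>y. y \<in> D \<and> y \<in> W" unfolding D_def using x(3) by blast
  qed
  ultimately show False using disj by blast
qed

theorem theorem3p7:
  fixes X :: "'a topology" and H :: "'a set set"
  assumes "tychonoff_space X"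
    and "hyp_F 2 X \<subseteq> H" and "H \<subseteq> hyp_K X"
  shows "(p_space X \<longleftrightarrow> p_space (subtopology (vietoris X) H))
       \<and> (p_space (subtopology (vietoris X) H) \<longleftrightarrow> f_prime_space (subtopology (vietoris X) H))"
proof -
  have T1: "t1_space X" using assms(1) by (simp add: tychonoff_space_def)
  have ab: "p_space X \<Longrightarrow> p_space (subtopology (vietoris X) H)" using a_imp_b[OF T1 _ assms(3)] .
  have ba: "p_space (subtopology (vietoris X) H) \<Longrightarrow> p_space X" using b_imp_a[OF _ assms(2,3)] .
  have bc: "p_space (subtopology (vietoris X) H) \<Longrightarrow> f_prime_space (subtopology (vietoris X) H)"
    using b_imp_c[OF _ assms] .
  have ca: "f_prime_space (subtopology (vietoris X) H) \<Longrightarrow> p_space X"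
    using c_imp_a[OF _ assms] .
  show ?thesis using ab ba bc ca by blast
qed

end
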